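(* Let $m_1,m_2$ be positive integers, $r$ a real number with $0<|r|<1$, $d$ a positive integer, and ${\mathfrak p}(t)=(1+rt)^d$. Define $g:{\mathbb R}^2\to{\mathbb R}$ by $$g(t,k)=\begin{cases}2\,\dfrac{(\frac1{m_1}+\frac1{m_2})e^{-kt}-(\frac{e^k}{m_1}+\frac{e^{-k}}{m_2})}{e^k-e^{-k}}, & k\neq0,\\[2mm] \dfrac{1-t}{m_2}-\dfrac{1+t}{m_1}, & k=0.\end{cases}$$ Then there exists a unique $k_{m_1,m_2}\in{\mathbb R}$ such that $\int_{-1}^1 g(t,k_{m_1,m_2})\,{\mathfrak p}(t)\,dt=0$. *)

theory Defs
  imports "HOL-Analysis.Analysis"
begin

definition gfun :: "nat \<Rightarrow> nat \<Rightarrow> real \<Rightarrow> real \<Rightarrow> real" where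
  "gfun m1 m2 t k =
     (if k \<noteq> 0 then
        2 * ((1 / real m1 + 1 / real m2) * exp (- k * t)
             - (exp k / real m1 + exp (- k) / real m2)) / (exp k - exp (- k))
      else (1 - t) / real m2 - (1 + t) / real m1)"

definition pfun :: "real \<Rightarrow> nat \<Rightarrow> real \<Rightarrow> real" where
  "pfun r d t = (1 + r * t) ^ d"

end

theory Submission
  imports Defs
begin

definition phi :: "real \<Rightarrow> real \<Rightarrow> real" where
  "phi k t = (if k \<noteq> 0 then (exp k - exp (- k * t)) / (exp k - exp (- k)) else (t + 1) / 2)"

lemma denom_nz: "k \<noteq> 0 \<Longrightarrow> exp k - exp (- k) \<noteq> (0::real)"
  by (metis add.inverse_inverse exp_inj_iff neg_equal_zero right_minus_eq)

lemma gfun_phi: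
  assumes "m1 > 0" "m2 > 0"
  shows "gfun m1 m2 t k = 2 / real m2 - 2 * (1 / real m1 + 1 / real m2) * phi k t"
proof (cases "k = 0")
  case True thus ?thesis using assms by (simp add: gfun_def phi_def field_simps)
next
  case False
  have d: "exp k - exp (- k) \<noteq> 0" using denom_nz[OF False] .
  show ?thesis using False d assms
    by (simp add: gfun_def phi_def field_simps)
qed

lemma phi_cont_t: "continuous_on A (phi k)"
proof (cases "k = 0")
  case True thus ?thesis by (simp add: phi_def[abs_def]) (intro continuous_intros, auto)
next
  case False
  thus ?thesis using denom_nz[OF False] by (simp add: phi_def[abs_def]) (intro continuous_intros, auto)
qed

lemma phi_bounds:
  assumes "-1 \<le> t" "t \<le> 1"
  shows "0 \<le> phi k t \<and> phi k t \<le> 1"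
proof (cases "k = 0")
  case True thus ?thesis using assms by (simp add: phi_def)
next
  case False
  show ?thesis
  proof (cases "k > 0")
    case True
    have a: "k*t \<le> k" using True assms(2) mult_left_le[of t k] by simp
    have b: "k*(-t) \<le> k" using True assms(1) mult_left_le[of "-t" k] by simp
    have "exp (-k) < exp k" using True by simp
    moreover have "exp (-k) \<le> exp (-k*t)" using a by simp
    moreover have "exp (-k*t) \<le> exp k" using b by simp
    ultimately show ?thesis using False by (simp add: phi_def divide_simps)
  next
    case nk: False
    with False have k: "k < 0" by simp
    have a: "(-k)*t \<le> -k" using k assms(2) mult_left_le[of t "-k"] by simp
    have b: "(-k)*(-t) \<le> -k" using k assms(1) mult_left_le[of "-t" "-k"] by simp
    have "exp k < exp (-k)" using k by simp
    moreover have "exp (-k*t) \<le> exp (-k)" using a by simp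
    moreover have "exp k \<le> exp (-k*t)" using b by simp
    ultimately show ?thesis using False by (simp add: phi_def divide_simps)
  qed
qed

lemma exp_gt_lin: "x \<noteq> 0 \<Longrightarrow> 1 + x < exp (x::real)"
proof (cases "x \<le> -2")
  case True thus ?thesis by (smt (verit) exp_gt_zero)
next
  case False
  assume x: "x \<noteq> 0"
  have "(1 + x/2)^2 \<le> exp (x/2) ^ 2"
    using False by (intro power_mono) auto
  also have "exp (x/2) ^ 2 = exp x" by (simp add: power2_eq_square flip: exp_add)
  finally have "(1 + x/2)^2 \<le> exp x" .
  moreover have "0 < x*x" using x by (cases "x > 0") (auto simp: mult_neg_neg)
  hence "1 + x < (1 + x/2)^2" by (simp add: power2_eq_square algebra_simps)
  ultimately show ?thesis by linarith
qed

lemma phi_deriv_pos: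
  assumes k: "k \<noteq> 0" and t: "-1 < t" "t < 1"
  shows "\<exists>y. DERIV (\<lambda>k. phi k t) k :> y \<and> y > 0"
proof -
  define f where "f = (\<lambda>k. exp k - exp (-k*t))"
  define g where "g = (\<lambda>k::real. exp k - exp (-k))"
  have df: "DERIV f k :> exp k + t * exp (-k*t)" unfolding f_def
    by (auto intro!: derivative_eq_intros)
  have dg: "DERIV g k :> exp k + exp (-k)" unfolding g_def
    by (auto intro!: derivative_eq_intros)
  have gk: "g k \<noteq> 0" using denom_nz[OF k] by (simp add: g_def)
  have D: "DERIV (\<lambda>k. f k / g k) k :>
      ((exp k + t * exp (-k*t)) * g k - (exp k + exp (-k)) * f k) / (g k ^ Suc (Suc 0))"
    by (rule DERIV_quotient[OF df dg gk])
  have D2: "DERIV (\<lambda>k. phi k t) k :>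
      ((exp k + t * exp (-k*t)) * g k - (exp k + exp (-k)) * f k) / (g k ^ Suc (Suc 0))"
    by (rule has_field_derivative_transform_within_open[OF D, of "UNIV - {0}"])
       (use k in \<open>auto simp: phi_def f_def g_def\<close>)
  have num: "(exp k + t * exp (-k*t)) * g k - (exp k + exp (-k)) * f k
      = -2 + (1+t) * exp (k*(1-t)) + (1-t) * exp (-k*(1+t))"
  proof -
    have e1: "exp k * exp (-k) = 1" by (simp flip: exp_add)
    have e2: "exp (k*(1-t)) = exp k * exp (-k*t)" by (simp add: algebra_simps flip: exp_add)
    have e3: "exp (-k*(1+t)) = exp (-k) * exp (-k*t)" by (simp add: algebra_simps flip: exp_add)
    have alg: "\<And>X Y E. X*Y = 1 \<Longrightarrow> (X + t*E)*(X - Y) - (X+Y)*(X-E) = -2 + (1+t)*(X*E) + (1-t)*(Y*E)"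
      by (simp add: algebra_simps)
    show ?thesis unfolding f_def g_def e2 e3 by (rule alg[OF e1])
  qed
  have A: "1 + k*(1-t) < exp (k*(1-t))" using k t by (intro exp_gt_lin) auto
  have B: "1 + (-k*(1+t)) \<le> exp (-k*(1+t))" by (rule exp_ge_add_one_self)
  have "(1+t) * (1 + k*(1-t)) < (1+t) * exp (k*(1-t))" using A t by simp
  moreover have "(1-t) * (1 + (-k*(1+t))) \<le> (1-t) * exp (-k*(1+t))" using B t by simp
  ultimately have pos: "0 < -2 + (1+t) * exp (k*(1-t)) + (1-t) * exp (-k*(1+t))"
    by (simp add: algebra_simps)
  hence "0 < ((exp k + t * exp (-k*t)) * g k - (exp k + exp (-k)) * f k) / (g k ^ Suc (Suc 0))"
  proof -
    have gp: "0 < g k * g k" using gk by (cases "g k > 0") (auto simp: mult_neg_neg)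
    show ?thesis unfolding num using gp pos by (simp add: divide_pos_pos)
  qed
  thus ?thesis using D2 by blast
qed

lemma phi_isCont: "isCont (\<lambda>k. phi k t) k0"
proof (cases "k0 = 0")
  case False
  define h where "h = (\<lambda>k. (exp k - exp (- k * t)) / (exp k - exp (- k)))"
  have "isCont (\<lambda>k. (exp k - exp (- k * t)) / (exp k - exp (- k))) k0"
    using denom_nz[OF False] by (intro continuous_intros) auto
  moreover have "eventually (\<lambda>k. phi k t = (exp k - exp (- k * t)) / (exp k - exp (- k))) (nhds k0)"
  proof -
    have "eventually (\<lambda>k. k \<in> UNIV - {0}) (nhds k0)"
      using False by (intro eventually_nhds_in_open) auto
    thus ?thesis by eventually_elim (auto simp: phi_def)
  qed
  ultimately show ?thesis using isCont_cong[of "\<lambda>k. phi k t" h k0] unfolding h_def by blast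
next
  case True
  have dn: "DERIV (\<lambda>k. exp k - exp (-k*t)) 0 :> 1 + t"
    by (auto intro!: derivative_eq_intros)
  have dd: "DERIV (\<lambda>k::real. exp k - exp (-k)) 0 :> 2"
    by (auto intro!: derivative_eq_intros)
  have ln: "((\<lambda>k. (exp k - exp (-k*t) - (exp 0 - exp (-0*t))) / (k - 0)) \<longlongrightarrow> 1 + t) (at 0)"
    using dn unfolding has_field_derivative_iff .
  have ld: "((\<lambda>k. (exp k - exp (-k) - (exp 0 - exp (-0))) / (k - 0)) \<longlongrightarrow> 2) (at (0::real))"
    using dd unfolding has_field_derivative_iff .
  have lim: "((\<lambda>k. ((exp k - exp (-k*t) - (exp 0 - exp (-0*t))) / (k - 0)) /
       ((exp k - exp (-k) - (exp 0 - exp (-0))) / (k - 0))) \<longlongrightarrow> (1 + t) / 2) (at 0)"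
    by (rule tendsto_divide[OF ln ld]) simp
  have ev: "eventually (\<lambda>k. ((exp k - exp (-k*t) - (exp 0 - exp (-0*t))) / (k - 0)) /
       ((exp k - exp (-k) - (exp 0 - exp (-0))) / (k - 0)) = phi k t) (at 0)"
    by (auto simp: eventually_at_filter phi_def)
  have "((\<lambda>k. phi k t) \<longlongrightarrow> phi 0 t) (at 0)"
    using tendsto_cong[OF ev] lim by (simp add: phi_def add.commute)
  thus ?thesis using True by (simp add: isCont_def)
qed

lemma phi_mono_aux:
  assumes "k1 < k2" "\<not> (k1 < 0 \<and> 0 < k2)" "-1 < t" "t < 1"
  shows "phi k1 t < phi k2 t"
proof (rule DERIV_pos_imp_increasing_open[OF assms(1)])
  fix x assume "k1 < x" "x < k2"
  hence "x \<noteq> 0" using assms(2) by auto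
  thus "\<exists>y. DERIV (\<lambda>k. phi k t) x :> y \<and> 0 < y" using phi_deriv_pos assms(3,4) by blast
next
  show "continuous_on {k1..k2} (\<lambda>k. phi k t)"
    by (intro continuous_at_imp_continuous_on ballI phi_isCont)
qed

lemma phi_mono:
  assumes "k1 < k2" "-1 < t" "t < 1"
  shows "phi k1 t < phi k2 t"
proof (cases "k1 < 0 \<and> 0 < k2")
  case True
  have "phi k1 t < phi 0 t" using True assms by (intro phi_mono_aux) auto
  also have "\<dots> < phi k2 t" using True assms by (intro phi_mono_aux) auto
  finally show ?thesis .
qed (use assms phi_mono_aux in auto)

lemma phi_ends: "phi k (-1) = 0" "phi k 1 = 1"
  using denom_nz[of k] by (auto simp: phi_def)

lemma phi_mono_le:
  assumes "k1 \<le> k2" "-1 \<le> t" "t \<le> 1"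
  shows "phi k1 t \<le> phi k2 t"
proof (cases "k1 = k2")
  case False
  hence lt: "k1 < k2" using assms by simp
  show ?thesis
  proof (cases "t = -1 \<or> t = 1")
    case True thus ?thesis by (auto simp: phi_ends)
  next
    case False
    hence "-1 < t" "t < 1" using assms by auto
    thus ?thesis using phi_mono[OF lt] by (simp add: less_imp_le)
  qed
qed simp

lemma pos_integral:
  fixes h :: "real \<Rightarrow> real"
  assumes c: "continuous_on {-1..1} h" and nn: "\<And>t. t \<in> {-1..1} \<Longrightarrow> 0 \<le> h t" and h0: "0 < h 0"
  shows "0 < integral {-1..1} h"
proof -
  have int: "h integrable_on {-1..1}" using c by (rule integrable_continuous_interval)
  have ge: "0 \<le> integral {-1..1} h" using int nn by (rule integral_nonneg)
  have "integral {-1..1} h \<noteq> 0"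
  proof
    assume z: "integral {-1..1} h = 0"
    have hz: "(h has_integral 0) (cbox (-1) 1)"
      using int z by (metis has_integral_integral interval_cbox)
    have c': "continuous_on (cbox (-1) 1) h" using c by (simp add: cbox_interval)
    have nn': "\<And>x. x \<in> box (-1) 1 \<Longrightarrow> 0 \<le> h x" using nn by (simp add: box_real)
    have ne: "box (-1::real) 1 \<noteq> {}" by (simp add: box_real)
    have mem: "(0::real) \<in> cbox (-1) 1" by (simp add: cbox_interval)
    have "h 0 = 0" by (rule has_integral_0_cbox_imp_0[OF c' nn' hz ne mem])
    thus False using h0 by simp
  qed
  thus ?thesis using ge by simp
qed

lemma p_cont: "continuous_on A (pfun r d)"
  unfolding pfun_def[abs_def] by (intro continuous_intros)

lemma p_pos: assumes "\<bar>r\<bar> < 1" "t \<in> {-1..1}" shows "0 < pfun r d t"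
proof -
  have "\<bar>r * t\<bar> \<le> \<bar>r\<bar>" using assms(2) by (auto simp: abs_mult mult_left_le)
  hence "0 < 1 + r * t" using assms(1) by linarith
  thus ?thesis by (simp add: pfun_def)
qed

lemma p_bound: assumes "\<bar>r\<bar> < 1" "t \<in> {-1..1}" shows "\<bar>pfun r d t\<bar> \<le> 2 ^ d"
proof -
  have "\<bar>r * t\<bar> \<le> \<bar>r\<bar>" using assms(2) by (auto simp: abs_mult mult_left_le)
  hence "\<bar>1 + r * t\<bar> \<le> 2" using assms(1) by linarith
  hence "\<bar>1 + r * t\<bar> ^ d \<le> 2 ^ d" by (intro power_mono) auto
  thus ?thesis by (simp add: pfun_def power_abs)
qed

lemma phi_p_int: "(\<lambda>t. phi k t * pfun r d t) integrable_on {-1..1}"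
  by (intro integrable_continuous_interval continuous_intros phi_cont_t p_cont)

lemma phi_p_bound: assumes "\<bar>r\<bar> < 1" "t \<in> {-1..1}"
  shows "norm (phi k t * pfun r d t) \<le> 2 ^ d"
proof -
  have "\<bar>phi k t\<bar> \<le> 1" using phi_bounds[of t k] assms(2) by auto
  hence "\<bar>phi k t\<bar> * \<bar>pfun r d t\<bar> \<le> 1 * 2 ^ d"
    using p_bound[OF assms] by (intro mult_mono) auto
  thus ?thesis by (simp add: abs_mult)
qed

lemma Phi_strict:
  assumes r: "\<bar>r\<bar> < 1" and k: "k1 < k2"
  shows "integral {-1..1} (\<lambda>t. phi k1 t * pfun r d t) < integral {-1..1} (\<lambda>t. phi k2 t * pfun r d t)"
proof -
  have "0 < integral {-1..1} (\<lambda>t. (phi k2 t - phi k1 t) * pfun r d t)"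
  proof (rule pos_integral)
    show "continuous_on {-1..1} (\<lambda>t. (phi k2 t - phi k1 t) * pfun r d t)"
      by (intro continuous_intros phi_cont_t p_cont)
    show "0 \<le> (phi k2 t - phi k1 t) * pfun r d t" if "t \<in> {-1..1}" for t
    proof -
      have "0 \<le> phi k2 t - phi k1 t" using phi_mono_le[of k1 k2 t] that k by auto
      moreover have "0 \<le> pfun r d t" using p_pos[OF r that, of d] by simp
      ultimately show ?thesis by (rule mult_nonneg_nonneg)
    qed
    show "0 < (phi k2 0 - phi k1 0) * pfun r d 0"
      using phi_mono[OF k, of 0] p_pos[OF r, of 0] by simp
  qed
  also have "integral {-1..1} (\<lambda>t. (phi k2 t - phi k1 t) * pfun r d t)
     = integral {-1..1} (\<lambda>t. phi k2 t * pfun r d t) - integral {-1..1} (\<lambda>t. phi k1 t * pfun r d t)"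
  proof -
    have "(\<lambda>t. (phi k2 t - phi k1 t) * pfun r d t) = (\<lambda>t. phi k2 t * pfun r d t - phi k1 t * pfun r d t)"
      by (simp add: left_diff_distrib)
    thus ?thesis using integral_diff[OF phi_p_int[of k2 r d] phi_p_int[of k1 r d]] by simp
  qed
  finally show ?thesis by simp
qed

lemma Phi_cont:
  assumes r: "\<bar>r\<bar> < 1"
  shows "isCont (\<lambda>k. integral {-1..1} (\<lambda>t. phi k t * pfun r d t)) k0"
proof (rule continuous_at_sequentiallyI)
  fix u :: "nat \<Rightarrow> real" assume u: "u \<longlonglongrightarrow> k0"
  show "(\<lambda>n. integral {-1..1} (\<lambda>t. phi (u n) t * pfun r d t)) \<longlonglongrightarrow>
        integral {-1..1} (\<lambda>t. phi k0 t * pfun r d t)"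
  proof (rule dominated_convergence(2))
    show "(\<lambda>t. phi (u n) t * pfun r d t) integrable_on {-1..1}" for n by (rule phi_p_int)
    show "(\<lambda>t. (2::real) ^ d) integrable_on {-1..1::real}"
      by (rule integrable_continuous_interval) (rule continuous_on_const)
    show "norm (phi (u n) t * pfun r d t) \<le> 2 ^ d" if "t \<in> {-1..1}" for n t
      using phi_p_bound[OF r that] .
    show "(\<lambda>n. phi (u n) t * pfun r d t) \<longlonglongrightarrow> phi k0 t * pfun r d t" for t
      by (intro tendsto_mult_right isCont_tendsto_compose[OF phi_isCont u])
  qed
qed

lemma phi_neg: "phi (-c) t = 1 - phi c (-t)"
proof (cases "c = 0")
  case True thus ?thesis by (simp add: phi_def field_simps)
next
  case False
  have d: "exp c - exp (-c) \<noteq> 0" using denom_nz[OF False] .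
  have d2: "exp (-c) - exp c \<noteq> 0" using d by linarith
  show ?thesis using False d d2 by (simp add: phi_def field_simps)
qed

lemma phi_alt: "c \<noteq> 0 \<Longrightarrow> phi c t = (1 - exp (-c*(1+t))) / (1 - exp (-c*2))"
proof -
  assume c: "c \<noteq> 0"
  have e: "exp (-c) \<noteq> 0" by simp
  have "phi c t = (exp (-c) * (exp c - exp (-c*t))) / (exp (-c) * (exp c - exp (-c)))"
    using c e by (simp add: phi_def)
  also have "exp (-c) * (exp c - exp (-c*t)) = 1 - exp (-c*(1+t))"
    by (simp add: right_diff_distrib algebra_simps flip: exp_add)
  also have "exp (-c) * (exp c - exp (-c)) = 1 - exp (-c*2)"
    by (simp add: right_diff_distrib algebra_simps flip: exp_add)
  finally show ?thesis .
qed

lemma exp_seq: "0 < x \<Longrightarrow> (\<lambda>n. exp (-(real n + 1) * x)) \<longlonglongrightarrow> 0"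
proof -
  assume x: "0 < x"
  have "(\<lambda>n. exp (-x) ^ n) \<longlonglongrightarrow> 0" using x by (intro LIMSEQ_power_zero) simp
  hence "(\<lambda>n. exp (-x) ^ Suc n) \<longlonglongrightarrow> 0" by (rule LIMSEQ_Suc)
  moreover have "exp (-(real n + 1) * x) = exp (-x) ^ Suc n" for n
    using exp_of_nat_mult[of "Suc n" "-x"] by (simp add: algebra_simps)
  ultimately show ?thesis by simp
qed

lemma phi_lim_top: "-1 < t \<Longrightarrow> (\<lambda>n. phi (real n + 1) t) \<longlonglongrightarrow> 1"
proof -
  assume t: "-1 < t"
  have "(\<lambda>n. (1 - exp (-(real n + 1)*(1+t))) / (1 - exp (-(real n + 1)*2))) \<longlonglongrightarrow> (1 - 0) / (1 - 0)"
    using t by (intro tendsto_intros exp_seq) auto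
  moreover have "phi (real n + 1) t = (1 - exp (-(real n + 1)*(1+t))) / (1 - exp (-(real n + 1)*2))" for n
    by (rule phi_alt) (simp add: add_nonneg_eq_0_iff)
  ultimately show ?thesis by simp
qed

lemma phi_lim_bot: "t < 1 \<Longrightarrow> (\<lambda>n. phi (-(real n + 1)) t) \<longlonglongrightarrow> 0"
proof -
  assume t: "t < 1"
  have "(\<lambda>n. 1 - phi (real n + 1) (-t)) \<longlonglongrightarrow> 1 - 1"
    using t by (intro tendsto_intros phi_lim_top) auto
  moreover have "(\<lambda>n. 1 - phi (real n + 1) (-t)) = (\<lambda>n. phi (-(real n + 1)) t)"
    by (simp only: phi_neg)
  ultimately show ?thesis by simp
qed

lemma Phi_top:
  assumes r: "\<bar>r\<bar> < 1"
  shows "(\<lambda>n. integral {-1..1} (\<lambda>t. phi (real n + 1) t * pfun r d t)) \<longlonglongrightarrow> integral {-1..1} (pfun r d)"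
proof -
  have "(\<lambda>n. integral {-1..1} (\<lambda>t. phi (real n + 1) t * pfun r d t)) \<longlonglongrightarrow>
        integral {-1..1} (\<lambda>t. if t = -1 then 0 else pfun r d t)"
  proof (rule dominated_convergence(2))
    show "(\<lambda>t. phi (real n + 1) t * pfun r d t) integrable_on {-1..1}" for n by (rule phi_p_int)
    show "(\<lambda>t. (2::real) ^ d) integrable_on {-1..1::real}"
      by (rule integrable_continuous_interval) (rule continuous_on_const)
    show "norm (phi (real n + 1) t * pfun r d t) \<le> 2 ^ d" if "t \<in> {-1..1}" for n t
      using phi_p_bound[OF r that] .
    show "(\<lambda>n. phi (real n + 1) t * pfun r d t) \<longlonglongrightarrow> (if t = -1 then 0 else pfun r d t)"
      if "t \<in> {-1..1}" for t
    proof (cases "t = -1")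
      case True thus ?thesis by (simp add: phi_ends)
    next
      case False
      hence "-1 < t" using that by auto
      from tendsto_mult_right[OF phi_lim_top[OF this], of "pfun r d t"] False show ?thesis by simp
    qed
  qed
  moreover have "integral {-1..1} (\<lambda>t. if t = -1 then 0 else pfun r d t) = integral {-1..1} (pfun r d)"
    by (rule integral_spike[of "{-1}"]) auto
  ultimately show ?thesis by simp
qed

lemma Phi_bot:
  assumes r: "\<bar>r\<bar> < 1"
  shows "(\<lambda>n. integral {-1..1} (\<lambda>t. phi (-(real n + 1)) t * pfun r d t)) \<longlonglongrightarrow> 0"
proof -
  have "(\<lambda>n. integral {-1..1} (\<lambda>t. phi (-(real n + 1)) t * pfun r d t)) \<longlonglongrightarrow>
        integral {-1..1} (\<lambda>t. if t = 1 then pfun r d t else 0)"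
  proof (rule dominated_convergence(2))
    show "(\<lambda>t. phi (-(real n + 1)) t * pfun r d t) integrable_on {-1..1}" for n by (rule phi_p_int)
    show "(\<lambda>t. (2::real) ^ d) integrable_on {-1..1::real}"
      by (rule integrable_continuous_interval) (rule continuous_on_const)
    show "norm (phi (-(real n + 1)) t * pfun r d t) \<le> 2 ^ d" if "t \<in> {-1..1}" for n t
      using phi_p_bound[OF r that] .
    show "(\<lambda>n. phi (-(real n + 1)) t * pfun r d t) \<longlonglongrightarrow> (if t = 1 then pfun r d t else 0)"
      if "t \<in> {-1..1}" for t
    proof (cases "t = 1")
      case True thus ?thesis by (simp add: phi_ends)
    next
      case False
      hence "t < 1" using that by auto
      from tendsto_mult_right[OF phi_lim_bot[OF this], of "pfun r d t"] False show ?thesis by simp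
    qed
  qed
  moreover have "integral {-1..1} (\<lambda>t. if t = 1 then pfun r d t else 0) = integral {-1..1} (\<lambda>t. 0::real)"
    by (subst integral_spike[of "{1}" _ "\<lambda>t. 0"]) auto
  ultimately show ?thesis by simp
qed

theorem lemmaA1:
  fixes m1 m2 d :: nat and r :: real
  assumes "m1 > 0" and "m2 > 0" and "0 < \<bar>r\<bar>" and "\<bar>r\<bar> < 1" and "d > 0"
  shows "\<exists>!k::real. integral {-1..1} (\<lambda>t. gfun m1 m2 t k * pfun r d t) = 0"
proof -
  have r: "\<bar>r\<bar> < 1" by fact
  define Phi where "Phi = (\<lambda>k. integral {-1..1} (\<lambda>t. phi k t * pfun r d t))"
  define a where "a = 1 / real m1"
  define b where "b = 1 / real m2"
  define P where "P = integral {-1..1} (pfun r d)"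
  have a: "0 < a" using assms(1) by (simp add: a_def)
  have b: "0 < b" using assms(2) by (simp add: b_def)
  have P: "0 < P" unfolding P_def
    by (rule pos_integral) (use p_pos[OF r] p_cont in \<open>auto simp: less_imp_le\<close>)
  have F: "integral {-1..1} (\<lambda>t. gfun m1 m2 t k * pfun r d t) = 2*b*P - 2*(a+b)*Phi k" for k
  proof -
    have eq: "(\<lambda>t. gfun m1 m2 t k * pfun r d t) =
        (\<lambda>t. (2*b) * pfun r d t - (2*(a+b)) * (phi k t * pfun r d t))"
      by (rule ext) (simp add: gfun_phi[OF assms(1,2)] a_def b_def algebra_simps)
    have i1: "(\<lambda>t. (2*b) * pfun r d t) integrable_on {-1..1}"
      by (intro integrable_continuous_interval continuous_intros p_cont)
    have i2: "(\<lambda>t. (2*(a+b)) * (phi k t * pfun r d t)) integrable_on {-1..1}"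
      by (intro integrable_continuous_interval continuous_intros p_cont phi_cont_t)
    show ?thesis unfolding eq integral_diff[OF i1 i2] by (simp add: P_def Phi_def)
  qed
  define c where "c = b * P / (a + b)"
  have iff: "integral {-1..1} (\<lambda>t. gfun m1 m2 t k * pfun r d t) = 0 \<longleftrightarrow> Phi k = c" for k
    unfolding F c_def using a b by (auto simp: field_simps)
  have c0: "0 < c" using a b P by (simp add: c_def)
  have cP: "c < P" using a b P by (simp add: c_def field_simps)
  have "eventually (\<lambda>n. c < Phi (real n + 1)) sequentially"
    using order_tendstoD(1)[OF Phi_top[OF r, of d] cP[unfolded P_def]] by (simp add: Phi_def)
  then obtain N where N: "c < Phi (real N + 1)" by (auto simp: eventually_sequentially)
  have "eventually (\<lambda>n. Phi (-(real n + 1)) < c) sequentially"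
    using order_tendstoD(2)[OF Phi_bot[OF r, of d] c0] by (simp add: Phi_def)
  then obtain M where M: "Phi (-(real M + 1)) < c" by (auto simp: eventually_sequentially)
  have cont: "isCont Phi x" for x unfolding Phi_def by (rule Phi_cont[OF r])
  have strict: "k1 < k2 \<Longrightarrow> Phi k1 < Phi k2" for k1 k2
    unfolding Phi_def by (rule Phi_strict[OF r])
  obtain k where k: "Phi k = c"
    using IVT[of Phi "-(real M + 1)" c "real N + 1"] M N cont by force
  show ?thesis
  proof (rule ex1I[of _ k])
    show "integral {-1..1} (\<lambda>t. gfun m1 m2 t k * pfun r d t) = 0" using k iff by simp
  next
    fix k' assume "integral {-1..1} (\<lambda>t. gfun m1 m2 t k' * pfun r d t) = 0"
    hence k': "Phi k' = c" using iff by simp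
    show "k' = k"
    proof (rule ccontr)
      assume "k' \<noteq> k"
      hence "k' < k \<or> k < k'" by auto
      thus False using strict k k' by force
    qed
  qed
qed

end
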